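(* For all integers $n \geq 1$ and $i \geq 1$, the number of partitions of $n$ whose smallest part is exactly $i$ equals $$\sum_{s=1}^{i} (-1)^{s-1} \sum_{\pi \in U_{s,i}} p(n - |\pi|).$$
   Context: $p(m)$ is the number of partitions of $m$, with $p(0)=1$ and $p(m)=0$ for $m<0$. $U_{s,i}$ denotes the set of partitions into exactly $s$ distinct parts whose largest part equals $i$, and $|\pi|$ denotes the sum of the parts of $\pi$. *)

theory Defs
  imports Main "HOL-Library.Multiset"
begin

definition partitions :: "nat \<Rightarrow> nat multiset set" where
  "partitions m = {M. (\<forall>x\<in>#M. 0 < x) \<and> sum_mset M = m}"

definition part_count :: "int \<Rightarrow> nat" where
  "part_count m = (if m < 0 then 0 else card (partitions (nat m)))"

text \<open>U s i: partitions into exactly s distinct parts with largest part i,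
  represented as the set of their (distinct, positive) parts.\<close>
definition U :: "nat \<Rightarrow> nat \<Rightarrow> nat set set" where
  "U s i = {S. S \<subseteq> {1..} \<and> finite S \<and> card S = s \<and> i \<in> S \<and> (\<forall>x\<in>S. x \<le> i)}"

end

theory Submission
  imports Defs
begin

lemma size_le_sum: "(\<forall>x\<in>#M. 0 < (x::nat)) \<Longrightarrow> size M \<le> sum_mset M"
  by (induction M) auto

lemma elem_le_sum: "(x::nat) \<in># M \<Longrightarrow> x \<le> sum_mset M"
  using sum_mset.remove[of x M] by simp

lemma finite_partitions: "finite (partitions m)"
proof -
  have "partitions m \<subseteq> (\<Union>k\<in>{0..m}. multisets_of_size {1..m} k)"
  proof
    fix M assume "M \<in> partitions m"
    hence p: "\<forall>x\<in>#M. 0 < x" "sum_mset M = m" by (auto simp: partitions_def)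
    have "size M \<le> m" using size_le_sum[OF p(1)] p(2) by simp
    moreover have "set_mset M \<subseteq> {1..m}" using p elem_le_sum by fastforce
    ultimately show "M \<in> (\<Union>k\<in>{0..m}. multisets_of_size {1..m} k)"
      by (auto simp: multisets_of_size_def)
  qed
  thus ?thesis by (rule finite_subset) auto
qed

definition A :: "int \<Rightarrow> nat \<Rightarrow> nat" where
  "A m j = (if m < 0 then 0 else card {M \<in> partitions (nat m). \<forall>x\<in>#M. j \<le> x})"

lemma A_1: "A m 1 = part_count m"
  unfolding A_def part_count_def partitions_def
  by (auto intro!: arg_cong[where f=card] simp: Suc_le_eq)

lemma A_0: "A m 0 = A m 1"
  unfolding A_def partitions_def
  by (auto intro!: arg_cong[where f=card] simp: Suc_le_eq)

lemma A_rec: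
  assumes "j \<ge> 1"
  shows "A m j = A m (Suc j) + A (m - int j) j"
proof (cases "m < 0")
  case True thus ?thesis by (simp add: A_def)
next
  case False
  define S where "S = {M \<in> partitions (nat m). \<forall>x\<in>#M. j \<le> x}"
  have S1: "{M \<in> S. j \<notin># M} = {M \<in> partitions (nat m). \<forall>x\<in>#M. Suc j \<le> x}"
    unfolding S_def by (auto simp: Suc_le_eq le_less)
  have fin: "finite S" unfolding S_def using finite_partitions by auto
  have "card S = card ({M \<in> S. j \<notin># M} \<union> {M \<in> S. j \<in># M})"
    by (rule arg_cong[where f=card]) blast
  also have "\<dots> = card {M \<in> S. j \<notin># M} + card {M \<in> S. j \<in># M}"
    by (rule card_Un_disjoint) (use fin in auto)
  finally have split: "card S = card {M \<in> S. j \<notin># M} + card {M \<in> S. j \<in># M}" .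
  have second: "card {M \<in> S. j \<in># M} = A (m - int j) j"
  proof (cases "m - int j < 0")
    case True
    have "{M \<in> S. j \<in># M} = {}"
    proof -
      { fix M assume "M \<in> S" "j \<in># M"
        hence "j \<le> nat m" using elem_le_sum by (fastforce simp: S_def partitions_def)
        hence False using True \<open>\<not> m < 0\<close> by linarith }
      thus ?thesis by auto
    qed
    hence "card {M \<in> S. j \<in># M} = 0" by (simp only: card.empty)
    thus ?thesis using True by (simp add: A_def)
  next
    case F2: False
    define S' where "S' = {M \<in> partitions (nat (m - int j)). \<forall>x\<in>#M. j \<le> x}"
    have "{M \<in> S. j \<in># M} = add_mset j ` S'"
    proof
      show "{M \<in> S. j \<in># M} \<subseteq> add_mset j ` S'"
      proof
        fix M assume M: "M \<in> {M \<in> S. j \<in># M}"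
        hence "M = add_mset j (M - {#j#})" by (simp add: insert_DiffM)
        moreover have "M - {#j#} \<in> S'"
        proof -
          have "sum_mset M = sum_mset (M - {#j#}) + j"
            using M sum_mset.remove[of j M] by simp
          thus ?thesis using M F2 by (auto simp: S_def S'_def partitions_def dest: in_diffD)
        qed
        ultimately show "M \<in> add_mset j ` S'" by blast
      qed
      show "add_mset j ` S' \<subseteq> {M \<in> S. j \<in># M}"
        using F2 assms by (auto simp: S_def S'_def partitions_def)
    qed
    hence "card {M \<in> S. j \<in># M} = card S'" by (simp add: card_image inj_on_def)
    thus ?thesis using F2 by (simp add: A_def S'_def)
  qed
  show ?thesis using False split second S1 by (simp add: A_def S_def)
qed

lemma A_formula:
  "int (A m i) = (\<Sum>T\<in>Pow {1..<i}. (-1) ^ card T * int (part_count (m - int (\<Sum>T))))"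
proof (induction i arbitrary: m)
  case 0
  show ?case using A_0[of m] A_1[of m] by simp
next
  case (Suc i)
  show ?case
  proof (cases "i = 0")
    case True
    have a: "A m (Suc i) = part_count m" using True A_1[of m] by simp
    have p: "Pow {1..<Suc i} = {{}}" using True by simp
    show ?thesis unfolding p a by simp
  next
    case False
    have ins: "{1..<Suc i} = insert i {1..<i}" using False by auto
    have inj: "inj_on (insert i) (Pow {1..<i})"
      by (rule inj_onI) (metis Diff_insert_absorb PowD atLeastLessThan_iff less_irrefl subsetD)
    have disj: "Pow {1..<i} \<inter> insert i ` Pow {1..<i} = {}" by auto
    have "(\<Sum>T\<in>Pow {1..<Suc i}. (-1) ^ card T * int (part_count (m - int (\<Sum>T))))
      = (\<Sum>T\<in>Pow {1..<i}. (-1) ^ card T * int (part_count (m - int (\<Sum>T))))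
        + (\<Sum>T\<in>insert i ` Pow {1..<i}. (-1) ^ card T * int (part_count (m - int (\<Sum>T))))"
      unfolding ins Pow_insert by (rule sum.union_disjoint) (use disj in auto)
    also have "(\<Sum>T\<in>insert i ` Pow {1..<i}. (-1) ^ card T * int (part_count (m - int (\<Sum>T))))
      = (\<Sum>T\<in>Pow {1..<i}. (-1) ^ card (insert i T) * int (part_count (m - int (\<Sum>(insert i T)))))"
      by (rule sum.reindex[OF inj, unfolded comp_def])
    also have "\<dots> = - (\<Sum>T\<in>Pow {1..<i}. (-1) ^ card T * int (part_count ((m - int i) - int (\<Sum>T))))"
    proof -
      have "\<And>T. T \<in> Pow {1..<i} \<Longrightarrow> (-1::int) ^ card (insert i T) * int (part_count (m - int (\<Sum>(insert i T))))
          = - ((-1) ^ card T * int (part_count ((m - int i) - int (\<Sum>T))))"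
      proof -
        fix T assume T: "T \<in> Pow {1..<i}"
        have fT: "finite T" using T finite_subset by blast
        have nT: "i \<notin> T" using T by auto
        show "?thesis T" using fT nT by (simp add: algebra_simps)
      qed
      thus ?thesis unfolding sum_negf[symmetric] by (rule sum.cong[OF refl])
    qed
    finally have c: "(\<Sum>T\<in>Pow {1..<Suc i}. (-1) ^ card T * int (part_count (m - int (\<Sum>T))))
      = (\<Sum>T\<in>Pow {1..<i}. (-1) ^ card T * int (part_count (m - int (\<Sum>T))))
        + - (\<Sum>T\<in>Pow {1..<i}. (-1) ^ card T * int (part_count ((m - int i) - int (\<Sum>T))))" .
    have r: "int (A m i) = int (A m (Suc i)) + int (A (m - int i) i)"
      using A_rec[of i m] False by simp
    show ?thesis using c r Suc.IH[of m] Suc.IH[of "m - int i"] by linarith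
  qed
qed

lemma card_min:
  fixes n i :: nat
  assumes "n \<ge> 1" and "i \<ge> 1"
  shows "card {M \<in> partitions n. Min_mset M = i} = A (int n - int i) i"
proof (cases "n < i")
  case True
  have "{M \<in> partitions n. Min_mset M = i} = {}"
  proof -
    { fix M assume M: "M \<in> partitions n" "Min_mset M = i"
      have "M \<noteq> {#}" using M assms by (auto simp: partitions_def)
      hence "i \<in># M" using M(2) Min_in[of "set_mset M"] by simp
      hence "i \<le> n" using elem_le_sum M(1) by (fastforce simp: partitions_def)
      hence False using True by simp }
    thus ?thesis by auto
  qed
  hence "card {M \<in> partitions n. Min_mset M = i} = 0" by (simp only: card.empty)
  thus ?thesis using True by (simp add: A_def)
next
  case False
  define S' where "S' = {M \<in> partitions (nat (int n - int i)). \<forall>x\<in>#M. i \<le> x}"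
  have eq: "{M \<in> partitions n. Min_mset M = i} = add_mset i ` S'"
  proof
    show "{M \<in> partitions n. Min_mset M = i} \<subseteq> add_mset i ` S'"
    proof
      fix M assume M: "M \<in> {M \<in> partitions n. Min_mset M = i}"
      have "M \<noteq> {#}" using M assms by (auto simp: partitions_def)
      hence iM: "i \<in># M" using M Min_in[of "set_mset M"] by simp
      have ge: "\<forall>x\<in>#M. i \<le> x" using M by auto
      have "M = add_mset i (M - {#i#})" using iM by auto
      moreover have "M - {#i#} \<in> S'"
      proof -
        have "sum_mset M = sum_mset (M - {#i#}) + i"
          using iM sum_mset.remove[of i M] by simp
        moreover have "sum_mset M = n" using M by (simp add: partitions_def)
        ultimately have e0: "sum_mset (M - {#i#}) = n - i" by linarith
        have "nat (int n - int i) = n - i" using False by linarith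
        hence e: "sum_mset (M - {#i#}) = nat (int n - int i)" using e0 by presburger
        have "\<forall>x\<in>#M - {#i#}. 0 < x \<and> i \<le> x" using M ge by (auto simp: partitions_def dest: in_diffD)
        thus ?thesis using e by (simp add: S'_def partitions_def)
      qed
      ultimately show "M \<in> add_mset i ` S'" by blast
    qed
    show "add_mset i ` S' \<subseteq> {M \<in> partitions n. Min_mset M = i}"
    proof
      fix M assume "M \<in> add_mset i ` S'"
      then obtain M' where M': "M' \<in> S'" "M = add_mset i M'" by auto
      have "Min_mset M = i" using M' by (auto simp: S'_def intro!: Min_eqI)
      thus "M \<in> {M \<in> partitions n. Min_mset M = i}"
        using M' False assms by (auto simp: S'_def partitions_def)
    qed
  qed
  hence "card {M \<in> partitions n. Min_mset M = i} = card S'" by (simp add: card_image inj_on_def)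
  thus ?thesis using False by (simp add: A_def S'_def)
qed

lemma U_eq:
  assumes "i \<ge> 1"
  shows "U s i = insert i ` {T \<in> Pow {1..<i}. card T + 1 = s}"
proof
  show "U s i \<subseteq> insert i ` {T \<in> Pow {1..<i}. card T + 1 = s}"
  proof
    fix S assume S: "S \<in> U s i"
    hence fS: "finite S" and iS: "i \<in> S" by (auto simp: U_def)
    have "S = insert i (S - {i})" using iS by auto
    moreover have "S - {i} \<in> {T \<in> Pow {1..<i}. card T + 1 = s}"
    proof -
      have u: "S \<subseteq> {1..}" "card S = s" "\<forall>x\<in>S. x \<le> i" using S by (simp_all add: U_def)
      have sub: "S - {i} \<subseteq> {1..<i}"
      proof
        fix x assume x: "x \<in> S - {i}"
        hence "1 \<le> x" "x \<le> i" "x \<noteq> i" using u by auto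
        thus "x \<in> {1..<i}" by simp
      qed
      have "card (S - {i}) + 1 = s" using u(2) fS iS card_Diff_singleton[OF iS]
        by (metis One_nat_def Suc_pred add.commute card_gt_0_iff empty_iff plus_1_eq_Suc)
      thus ?thesis using sub by simp
    qed
    ultimately show "S \<in> insert i ` {T \<in> Pow {1..<i}. card T + 1 = s}" by blast
  qed
  show "insert i ` {T \<in> Pow {1..<i}. card T + 1 = s} \<subseteq> U s i"
  proof
    fix S assume "S \<in> insert i ` {T \<in> Pow {1..<i}. card T + 1 = s}"
    then obtain T where T: "T \<subseteq> {1..<i}" "card T + 1 = s" "S = insert i T" by auto
    have fT: "finite T" using T(1) finite_subset by blast
    have "i \<notin> T" using T(1) by auto
    thus "S \<in> U s i" using T fT assms by (auto simp: U_def)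
  qed
qed

theorem mainTheorem4:
  fixes n i :: nat
  assumes "n \<ge> 1" and "i \<ge> 1"
  shows "int (card {M \<in> partitions n. Min_mset M = i}) =
    (\<Sum>s = 1..i. (-1) ^ (s - 1) *
       (\<Sum>\<pi>\<in>U s i. int (part_count (int n - int (\<Sum>\<pi>)))))"
proof -
  define g where "g T = (-1::int) ^ card T * int (part_count (int n - int i - int (\<Sum>T)))" for T :: "nat set"
  have inj: "inj_on (insert i) (Pow {1..<i})"
    by (rule inj_onI) (metis Diff_insert_absorb PowD atLeastLessThan_iff less_irrefl subsetD)
  have inner: "(-1) ^ (s - 1) * (\<Sum>\<pi>\<in>U s i. int (part_count (int n - int (\<Sum>\<pi>))))
      = (\<Sum>T\<in>{T \<in> Pow {1..<i}. card T + 1 = s}. g T)" for s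
  proof -
    have inj': "inj_on (insert i) {T \<in> Pow {1..<i}. card T + 1 = s}"
      by (rule inj_on_subset[OF inj]) auto
    have "(\<Sum>\<pi>\<in>U s i. int (part_count (int n - int (\<Sum>\<pi>))))
       = (\<Sum>T\<in>{T \<in> Pow {1..<i}. card T + 1 = s}. int (part_count (int n - int (\<Sum>(insert i T)))))"
      unfolding U_eq[OF assms(2)] by (rule sum.reindex[OF inj', unfolded comp_def])
    also have "\<dots> = (\<Sum>T\<in>{T \<in> Pow {1..<i}. card T + 1 = s}. int (part_count (int n - int i - int (\<Sum>T))))"
    proof (rule sum.cong[OF refl])
      fix T assume T: "T \<in> {T \<in> Pow {1..<i}. card T + 1 = s}"
      have fT: "finite T" using T finite_subset by blast
      have nT: "i \<notin> T" using T by auto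
      show "int (part_count (int n - int (\<Sum>(insert i T)))) = int (part_count (int n - int i - int (\<Sum>T)))"
        using fT nT by (simp add: algebra_simps)
    qed
    finally have X: "(\<Sum>\<pi>\<in>U s i. int (part_count (int n - int (\<Sum>\<pi>))))
       = (\<Sum>T\<in>{T \<in> Pow {1..<i}. card T + 1 = s}. int (part_count (int n - int i - int (\<Sum>T))))" .
    show ?thesis unfolding X sum_distrib_left g_def
    proof (rule sum.cong[OF refl])
      fix T assume "T \<in> {T \<in> Pow {1..<i}. card T + 1 = s}"
      hence "s - 1 = card T" by auto
      thus "(-1) ^ (s - 1) * int (part_count (int n - int i - int (\<Sum>T))) =
        (-1) ^ card T * int (part_count (int n - int i - int (\<Sum>T)))" by simp
    qed
  qed
  have "(\<Sum>s = 1..i. (-1) ^ (s - 1) *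
       (\<Sum>\<pi>\<in>U s i. int (part_count (int n - int (\<Sum>\<pi>)))))
     = (\<Sum>s = 1..i. (\<Sum>T\<in>{T \<in> Pow {1..<i}. card T + 1 = s}. g T))"
    by (rule sum.cong[OF refl]) (rule inner)
  also have "\<dots> = (\<Sum>T\<in>Pow {1..<i}. g T)"
  proof (rule sum.group)
    show "(\<lambda>T. card T + 1) ` Pow {1..<i} \<subseteq> {1..i}"
    proof
      fix x assume "x \<in> (\<lambda>T. card T + 1) ` Pow {1..<i}"
      then obtain T where "T \<subseteq> {1..<i}" "x = card T + 1" by auto
      moreover have "card T \<le> card {1..<i}" using calculation by (intro card_mono) auto
      ultimately show "x \<in> {1..i}" using assms(2) by auto
    qed
  qed auto
  also have "\<dots> = int (A (int n - int i) i)" unfolding g_def A_formula by simp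
  finally show ?thesis using card_min[OF assms] by simp
qed

end
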